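(* Let $\alpha\ge0$ and $\gamma\in\mathcal{B}$. Then there exist real functions $d_0,d_1$ on $[0,\Lambda)$ with $d_1(|p|)\ge1$ and $d_0(|p|)\ge1$ such that $D_\gamma(p)=d_1(|p|)\,\boldsymbol{\alpha}\cdot p+d_0(|p|)\,\beta$ for a.e. $p\in B(0,\Lambda)$. In particular $|D_\gamma(p)|\ge|D^0(p)|\ge|p|$ (as matrices) for a.e. $p\in B(0,\Lambda)$.
   Context: Let $\alpha_1,\alpha_2,\alpha_3,\beta$ be the standard $4\times4$ Dirac matrices, $D^0(p)=\boldsymbol{\alpha}\cdot p+\beta$, $\Lambda>0$. $\mathcal{A}$ is the set of measurable $\gamma:B(0,\Lambda)\to\{$hermitian $4\times4$ matrices$\}$ with $-\frac12\le\gamma(p)\le\frac12$; $\mathcal{B}=\{\gamma\in\mathcal{A}:\gamma(p)=f_1(|p|)\boldsymbol{\alpha}\cdot p+f_0(|p|)\beta\ \text{with real } f_0,f_1\le0\}$. For $\gamma\in\mathcal{A}$, $D_\gamma(p)=D^0(p)-\frac{\alpha}{2\pi^2}\int_{B(0,\Lambda)}\frac{\gamma(q)}{|p-q|^2}dq$ (the Fourier multiplier of the operator $D^0-\alpha\frac{\gamma(x-y)}{|x-y|}$). *)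

theory Defs
  imports "HOL-Analysis.Analysis" "Jordan_Normal_Form.Matrix"
begin

definition adj :: "complex mat \<Rightarrow> complex mat" where
  "adj A = mat (dim_col A) (dim_row A) (\<lambda>(i,j). cnj (A $$ (j,i)))"

definition hermitian_mat :: "complex mat \<Rightarrow> bool" where
  "hermitian_mat A \<longleftrightarrow> A \<in> carrier_mat (dim_row A) (dim_row A) \<and> adj A = A"

definition qform :: "complex mat \<Rightarrow> complex vec \<Rightarrow> complex" where
  "qform A v = (\<Sum>i<dim_row A. \<Sum>j<dim_col A. cnj (v $ i) * A $$ (i,j) * v $ j)"

definition psd_mat :: "complex mat \<Rightarrow> bool" where
  "psd_mat A \<longleftrightarrow> A \<in> carrier_mat (dim_row A) (dim_row A) \<and>
     (\<forall>v\<in>carrier_vec (dim_row A). Im (qform A v) = 0 \<and> Re (qform A v) \<ge> 0)"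

definition loewner_le :: "complex mat \<Rightarrow> complex mat \<Rightarrow> bool" where
  "loewner_le A B \<longleftrightarrow> dim_row A = dim_row B \<and> dim_col A = dim_col B \<and> psd_mat (B - A)"

text \<open>matrix absolute value |A| = sqrt(A^* A), the unique psd square root\<close>
definition mat_abs :: "complex mat \<Rightarrow> complex mat" where
  "mat_abs A = (THE B. B \<in> carrier_mat (dim_col A) (dim_col A) \<and> psd_mat B \<and> B * B = adj A * A)"

definition dirac_beta :: "complex mat" where
  "dirac_beta = mat_of_rows_list 4
     [[1,0,0,0],[0,1,0,0],[0,0,-1,0],[0,0,0,-1]]"

definition dirac_alpha1 :: "complex mat" where
  "dirac_alpha1 = mat_of_rows_list 4
     [[0,0,0,1],[0,0,1,0],[0,1,0,0],[1,0,0,0]]"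

definition dirac_alpha2 :: "complex mat" where
  "dirac_alpha2 = mat_of_rows_list 4
     [[0,0,0,-\<i>],[0,0,\<i>,0],[0,-\<i>,0,0],[\<i>,0,0,0]]"

definition dirac_alpha3 :: "complex mat" where
  "dirac_alpha3 = mat_of_rows_list 4
     [[0,0,1,0],[0,0,0,-1],[1,0,0,0],[0,-1,0,0]]"

definition alpha_dot :: "real^3 \<Rightarrow> complex mat" where
  "alpha_dot p = complex_of_real (p $ 1) \<cdot>\<^sub>m dirac_alpha1
              + complex_of_real (p $ 2) \<cdot>\<^sub>m dirac_alpha2
              + complex_of_real (p $ 3) \<cdot>\<^sub>m dirac_alpha3"

definition D0 :: "real^3 \<Rightarrow> complex mat" where
  "D0 p = alpha_dot p + dirac_beta"

definition setA :: "real \<Rightarrow> (real^3 \<Rightarrow> complex mat) set" where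
  "setA \<Lambda> = {\<gamma>. (\<forall>p\<in>ball 0 \<Lambda>. \<gamma> p \<in> carrier_mat 4 4 \<and> hermitian_mat (\<gamma> p)
        \<and> loewner_le (complex_of_real (-1/2) \<cdot>\<^sub>m 1\<^sub>m 4) (\<gamma> p)
        \<and> loewner_le (\<gamma> p) (complex_of_real (1/2) \<cdot>\<^sub>m 1\<^sub>m 4))
     \<and> (\<forall>i<4. \<forall>j<4. (\<lambda>q. \<gamma> q $$ (i,j)) \<in> borel_measurable (lebesgue_on (ball 0 \<Lambda>)))}"

definition setB :: "real \<Rightarrow> (real^3 \<Rightarrow> complex mat) set" where
  "setB \<Lambda> = {\<gamma>. \<gamma> \<in> setA \<Lambda> \<and>
     (\<exists>f0 f1 :: real \<Rightarrow> real. (\<forall>r\<in>{0..<\<Lambda>}. f0 r \<le> 0 \<and> f1 r \<le> 0) \<and>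
        (\<forall>p\<in>ball 0 \<Lambda>. \<gamma> p = complex_of_real (f1 (norm p)) \<cdot>\<^sub>m alpha_dot p
                              + complex_of_real (f0 (norm p)) \<cdot>\<^sub>m dirac_beta))}"

definition Dgamma :: "real \<Rightarrow> real \<Rightarrow> (real^3 \<Rightarrow> complex mat) \<Rightarrow> real^3 \<Rightarrow> complex mat" where
  "Dgamma \<alpha> \<Lambda> \<gamma> p = D0 p - complex_of_real (\<alpha> / (2 * pi\<^sup>2)) \<cdot>\<^sub>m
     mat 4 4 (\<lambda>(i,j). integral (ball 0 \<Lambda>)
        (\<lambda>q. \<gamma> q $$ (i,j) / complex_of_real ((norm (p - q))\<^sup>2)))"

end

theory Submission
  imports Defs
begin


lemma mat4_eqI:
  assumes "A \<in> carrier_mat 4 4" "B \<in> carrier_mat 4 4"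
    "\<And>i j. i \<in> {0,1,2,3} \<Longrightarrow> j \<in> {0,1,2,3} \<Longrightarrow> A $$ (i,j) = B $$ (i,j)"
  shows "A = B"
proof (rule eq_matI)
  fix i j assume "i < dim_row B" "j < dim_col B"
  then have "i < 4" "j < 4" using assms by auto
  then have "i \<in> {0,1,2,3}" "j \<in> {0,1,2,3}" by auto
  then show "A $$ (i,j) = B $$ (i,j)" using assms by blast
qed (use assms in auto)

definition Dm :: "real \<Rightarrow> real \<Rightarrow> real^3 \<Rightarrow> complex mat" where
  "Dm d1 d0 p = complex_of_real d1 \<cdot>\<^sub>m alpha_dot p + complex_of_real d0 \<cdot>\<^sub>m dirac_beta"

lemma dirac_carrier[simp]: "dirac_beta \<in> carrier_mat 4 4" "dirac_alpha1 \<in> carrier_mat 4 4"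
  "dirac_alpha2 \<in> carrier_mat 4 4" "dirac_alpha3 \<in> carrier_mat 4 4"
  by (simp_all add: dirac_beta_def dirac_alpha1_def dirac_alpha2_def dirac_alpha3_def mat_of_rows_list_def numeral_eq_Suc)

lemma alpha_dot_carrier[simp]: "alpha_dot p \<in> carrier_mat 4 4"
  by (simp add: alpha_dot_def)

lemma Dm_carrier[simp]: "Dm d1 d0 p \<in> carrier_mat 4 4"
  by (simp add: Dm_def)

definition Dx :: "real \<Rightarrow> real \<Rightarrow> real^3 \<Rightarrow> complex mat" where
 "Dx d1 d0 p = mat_of_rows_list 4
  [[d0, 0, d1 * vec_nth p 3, d1 * (vec_nth p 1 - \<i> * vec_nth p 2)],
   [0, d0, d1 * (vec_nth p 1 + \<i> * vec_nth p 2), - d1 * vec_nth p 3],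
   [d1 * vec_nth p 3, d1 * (vec_nth p 1 - \<i> * vec_nth p 2), - d0, 0],
   [d1 * (vec_nth p 1 + \<i> * vec_nth p 2), - d1 * vec_nth p 3, 0, - d0]]"

lemma Dx_carrier[simp]: "Dx d1 d0 p \<in> carrier_mat 4 4"
  by (simp add: Dx_def mat_of_rows_list_def numeral_eq_Suc)

lemma Dm_explicit: "Dm d1 d0 p = Dx d1 d0 p"
  apply (rule mat4_eqI, simp, simp)
  by (auto simp: Dm_def Dx_def alpha_dot_def dirac_beta_def dirac_alpha1_def dirac_alpha2_def dirac_alpha3_def mat_of_rows_list_def algebra_simps)

lemma adj_Dm: "adj (Dm d1 d0 p) = Dm d1 d0 p"
  unfolding Dm_explicit
  apply (rule mat4_eqI)
  apply (simp add: adj_def Dx_def mat_of_rows_list_def numeral_eq_Suc)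
  apply simp
  apply (auto simp: adj_def Dx_def mat_of_rows_list_def)
  done

lemma Dm_sq: "Dm d1 d0 p * Dm d1 d0 p = complex_of_real (d1^2 * (norm p)^2 + d0^2) \<cdot>\<^sub>m 1\<^sub>m 4"
proof -
  have n: "(norm p)^2 = (vec_nth p 1)^2 + (vec_nth p 2)^2 + (vec_nth p 3)^2"
  proof -
    have "(norm p)^2 = p \<bullet> p" by (rule power2_norm_eq_inner)
    also have "\<dots> = (vec_nth p 1)^2 + (vec_nth p 2)^2 + (vec_nth p 3)^2"
      by (simp add: inner_vec_def sum_3 power2_eq_square)
    finally show ?thesis .
  qed
  show ?thesis
  unfolding Dm_explicit n
  apply (rule mat4_eqI)
  apply (rule mult_carrier_mat[OF Dx_carrier Dx_carrier])
  apply simp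
  apply (auto simp: n Dx_def mat_of_rows_list_def scalar_prod_def numeral_eq_Suc)
  apply (auto simp: algebra_simps power2_eq_square)
  done
qed

lemma cnj_mult_self: "cnj z * z = complex_of_real ((cmod z)^2)"
  using complex_norm_square[of z] by (simp add: mult.commute)

lemma psd_unique_scalar:
  fixes B :: "complex mat" and s :: real
  assumes B: "B \<in> carrier_mat 4 4" and psd: "psd_mat B" and s: "s > 0"
    and sq: "B * B = complex_of_real (s^2) \<cdot>\<^sub>m 1\<^sub>m 4"
  shows "B = complex_of_real s \<cdot>\<^sub>m 1\<^sub>m 4"
proof -
  define C where "C i j = B $$ (i,j) - (if i = j then complex_of_real s else 0)" for i j
  have BB: "(\<Sum>k<4. B $$ (i,k) * B $$ (k,j)) = (if i = j then complex_of_real (s^2) else 0)"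
    if "i < 4" "j < 4" for i j
  proof -
    have "(B * B) $$ (i,j) = (complex_of_real (s^2) \<cdot>\<^sub>m 1\<^sub>m 4) $$ (i,j)" using sq by simp
    then show ?thesis using that B by (simp add: scalar_prod_def atLeast0LessThan)
  qed
  have BC: "(\<Sum>k<4. B $$ (i,k) * C k j) = - complex_of_real s * C i j" if "i < 4" "j < 4" for i j
  proof -
    have "(\<Sum>k<4. B $$ (i,k) * C k j) = (\<Sum>k<4. B $$ (i,k) * B $$ (k,j)) - (\<Sum>k<4. B $$ (i,k) * (if k = j then complex_of_real s else 0))"
      by (simp add: C_def algebra_simps sum_subtractf)
    also have "(\<Sum>k<4. B $$ (i,k) * (if k = j then complex_of_real s else 0)) = B $$ (i,j) * complex_of_real s"
      using that by (simp add: if_distrib[where f="\<lambda>x. _ * x"] cong: if_cong)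
    finally show ?thesis using BB[OF that] by (simp add: C_def algebra_simps power2_eq_square)
  qed
  have C0: "C i j = 0" if "i < 4" "j < 4" for i j
  proof -
    define v where "v = vec 4 (\<lambda>k. C k j)"
    have v: "v \<in> carrier_vec (dim_row B)" using B by (simp add: v_def)
    have "qform B v = (\<Sum>i<4. cnj (v $ i) * (\<Sum>k<4. B $$ (i,k) * v $ k))"
      using B by (simp add: qform_def sum_distrib_left mult.assoc)
    also have "\<dots> = (\<Sum>i<4. cnj (C i j) * (- complex_of_real s * C i j))"
      by (rule sum.cong, simp, simp add: v_def BC \<open>j < 4\<close>)
    also have "\<dots> = - complex_of_real s * (\<Sum>i<4. cnj (C i j) * C i j)"
      by (simp add: sum_distrib_left algebra_simps)
    also have "\<dots> = - complex_of_real s * (\<Sum>i<4. complex_of_real ((cmod (C i j))^2))"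
      by (simp only: cnj_mult_self)
    finally have q: "Re (qform B v) = - s * (\<Sum>i<4. (cmod (C i j))^2)"
      by (simp add: Re_sum)
    have "Re (qform B v) \<ge> 0" using psd v unfolding psd_mat_def by blast
    then have "s * (\<Sum>i<4. (cmod (C i j))^2) \<le> 0" using q by linarith
    then have "(\<Sum>i<4. (cmod (C i j))^2) \<le> 0" using s
      by (simp add: mult_le_0_iff)
    then have "\<forall>k\<in>{..<4}. (cmod (C k j))^2 = 0"
      using sum_nonneg_eq_0_iff[of "{..<4::nat}" "\<lambda>k. (cmod (C k j))^2"] by (simp add: order_antisym sum_nonneg)
    then show ?thesis using that by simp
  qed
  show ?thesis
  proof (rule eq_matI)
    fix i j assume "i < dim_row (complex_of_real s \<cdot>\<^sub>m 1\<^sub>m 4)" "j < dim_col (complex_of_real s \<cdot>\<^sub>m 1\<^sub>m 4)"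
    then have ij: "i < 4" "j < 4" by auto
    show "B $$ (i,j) = (complex_of_real s \<cdot>\<^sub>m 1\<^sub>m 4) $$ (i,j)"
      using C0[OF ij] ij by (simp add: C_def split: if_splits)
  qed (use B in auto)
qed

lemma qform_scalar:
  assumes "v \<in> carrier_vec 4"
  shows "qform (complex_of_real c \<cdot>\<^sub>m 1\<^sub>m 4) v = complex_of_real (c * (\<Sum>i<4. (cmod (v $ i))^2))"
proof -
  have "qform (complex_of_real c \<cdot>\<^sub>m 1\<^sub>m 4) v = (\<Sum>i<4. \<Sum>j<4. cnj (v $ i) * (if i = j then complex_of_real c else 0) * v $ j)"
    by (auto simp: qform_def intro!: sum.cong)
  also have "\<dots> = (\<Sum>i<4. complex_of_real c * (cnj (v $ i) * v $ i))"
  proof (intro sum.cong refl)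
    fix i :: nat assume "i \<in> {..<4}"
    have e: "\<And>j. cnj (v $ i) * (if i = j then complex_of_real c else 0) * v $ j = (if i = j then complex_of_real c * (cnj (v $ i) * v $ i) else 0)"
      by auto
    show "(\<Sum>j<4. cnj (v $ i) * (if i = j then complex_of_real c else 0) * v $ j) = complex_of_real c * (cnj (v $ i) * v $ i)"
      unfolding e using \<open>i \<in> {..<4}\<close> by simp
  qed
  also have "\<dots> = complex_of_real c * (\<Sum>i<4. complex_of_real ((cmod (v $ i))^2))"
    by (simp only: cnj_mult_self sum_distrib_left)
  also have "\<dots> = complex_of_real (c * (\<Sum>i<4. (cmod (v $ i))^2))"
    by simp
  finally show ?thesis .
qed

lemma psd_scalar: "c \<ge> 0 \<Longrightarrow> psd_mat (complex_of_real c \<cdot>\<^sub>m 1\<^sub>m 4)"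
  unfolding psd_mat_def by (auto simp: qform_scalar sum_nonneg)

lemma mat_abs_scalar:
  assumes D: "D \<in> carrier_mat 4 4" and s: "s > 0"
    and sq: "adj D * D = complex_of_real (s^2) \<cdot>\<^sub>m 1\<^sub>m 4"
  shows "mat_abs D = complex_of_real s \<cdot>\<^sub>m 1\<^sub>m 4"
  unfolding mat_abs_def
proof (rule the_equality)
  show "complex_of_real s \<cdot>\<^sub>m 1\<^sub>m 4 \<in> carrier_mat (dim_col D) (dim_col D) \<and> psd_mat (complex_of_real s \<cdot>\<^sub>m 1\<^sub>m 4) \<and>
    complex_of_real s \<cdot>\<^sub>m 1\<^sub>m 4 * (complex_of_real s \<cdot>\<^sub>m 1\<^sub>m 4) = adj D * D"
    using D s by (auto simp: psd_scalar sq power2_eq_square intro!: eq_matI)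
  fix B assume "B \<in> carrier_mat (dim_col D) (dim_col D) \<and> psd_mat B \<and> B * B = adj D * D"
  then show "B = complex_of_real s \<cdot>\<^sub>m 1\<^sub>m 4"
    using psd_unique_scalar[of B s] D s sq by auto
qed

lemma loewner_scalar: "a \<le> b \<Longrightarrow> loewner_le (complex_of_real a \<cdot>\<^sub>m 1\<^sub>m 4) (complex_of_real b \<cdot>\<^sub>m 1\<^sub>m 4)"
proof -
  assume ab: "a \<le> b"
  have "complex_of_real b \<cdot>\<^sub>m 1\<^sub>m 4 - complex_of_real a \<cdot>\<^sub>m 1\<^sub>m 4 = complex_of_real (b - a) \<cdot>\<^sub>m 1\<^sub>m 4"
    by (rule eq_matI) auto
  then show ?thesis unfolding loewner_le_def using psd_scalar[of "b - a"] ab by simp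
qed

lemma mat_abs_Dm:
  assumes "d0 \<noteq> 0"
  shows "mat_abs (Dm d1 d0 p) = complex_of_real (sqrt (d1^2 * (norm p)^2 + d0^2)) \<cdot>\<^sub>m 1\<^sub>m 4"
proof (rule mat_abs_scalar)
  have pos: "d1^2 * (norm p)^2 + d0^2 > 0" using assms
    by (simp add: add_nonneg_pos)
  then show "sqrt (d1^2 * (norm p)^2 + d0^2) > 0" by simp
  show "adj (Dm d1 d0 p) * Dm d1 d0 p = complex_of_real ((sqrt (d1^2 * (norm p)^2 + d0^2))^2) \<cdot>\<^sub>m 1\<^sub>m 4"
    using pos by (simp add: adj_Dm Dm_sq)
qed simp



lemma exists_dyadic:
  fixes d R :: real
  assumes "0 < d" "d < R"
  obtains k :: nat where "R / 2^(Suc k) \<le> d" "d < R / 2^k"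
proof -
  obtain n where n: "(1/2::real)^n < d / R" using real_arch_pow_inv[of "d/R" "1/2"] assms by auto
  have P: "R / 2^n \<le> d" using n assms by (simp add: field_simps power_divide)
  define m where "m = (LEAST n. R / 2^n \<le> d)"
  have m: "R / 2^m \<le> d" unfolding m_def by (rule LeastI[of _ n], rule P)
  have m0: "m \<noteq> 0"
  proof
    assume "m = 0" then show False using m assms by simp
  qed
  then obtain k where k: "m = Suc k" using not0_implies_Suc by blast
  have "\<not> (R / 2^k \<le> d)" using not_less_Least[of k "\<lambda>n. R / 2^n \<le> d"] k m_def by simp
  then show ?thesis using that m k by auto
qed

lemma ennreal_term_le_suminf: "f k \<le> (\<Sum>i. f i :: ennreal)"
proof -
  have "sum f {..<Suc k} \<le> (\<Sum>i. f i)" by (rule sum_le_suminf) (auto intro: summableI)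
  moreover have "f k \<le> sum f {..<Suc k}" by (simp add: add_increasing)
  ultimately show ?thesis by (rule order_trans[rotated])
qed

lemma inv_sq_set_integrable:
  fixes p :: "real^3" and R :: real
  assumes R: "R > 0"
  shows "set_integrable lborel (ball p R) (\<lambda>q. 1 / (norm (p - q))^2)"
proof -
  define V where "V = unit_ball_vol (real DIM(real^3))"
  have V: "V \<ge> 0" unfolding V_def by simp
  define g where "g k q = ennreal (4^(Suc k) / R^2) * indicator (ball p (R / 2^k)) q" for k q
  have g_meas: "g k \<in> borel_measurable lborel" for k unfolding g_def
    by (intro borel_measurable_times_ennreal borel_measurable_const borel_measurable_indicator) auto
  have bound: "ennreal (norm (indicator (ball p R) q *\<^sub>R (1 / (norm (p - q))^2))) \<le> (\<Sum>k. g k q)" for q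
  proof (cases "q \<in> ball p R \<and> q \<noteq> p")
    case False
    then show ?thesis by auto
  next
    case True
    define d where "d = norm (p - q)"
    have d: "0 < d" "d < R" using True by (auto simp: d_def dist_norm)
    obtain k where k: "R / 2^(Suc k) \<le> d" "d < R / 2^k" using exists_dyadic[OF d] by blast
    have "R^2 / 4^(Suc k) \<le> d^2"
    proof -
      have "(R / 2^(Suc k))^2 \<le> d^2" using k(1) R by (intro power_mono) auto
      moreover have "((2::real)^(Suc k))^2 = 4^(Suc k)"
        by (induct k) (simp_all add: power2_eq_square algebra_simps)
      ultimately show ?thesis by (simp add: power_divide)
    qed
    then have le: "1 / d^2 \<le> 4^(Suc k) / R^2" using d R
      by (simp add: field_simps)
    have "ennreal (norm (indicator (ball p R) q *\<^sub>R (1 / (norm (p - q))^2))) = ennreal (1 / d^2)"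
      using True by (simp add: d_def)
    also have "\<dots> \<le> g k q" using le k(2) by (simp add: g_def d_def dist_norm ennreal_leI)
    also have "\<dots> \<le> (\<Sum>k. g k q)" by (rule ennreal_term_le_suminf)
    finally show ?thesis .
  qed
  have "(\<integral>\<^sup>+q. ennreal (norm (indicator (ball p R) q *\<^sub>R (1 / (norm (p - q))^2))) \<partial>lborel) \<le> (\<integral>\<^sup>+q. (\<Sum>k. g k q) \<partial>lborel)"
    by (rule nn_integral_mono) (rule bound)
  also have "\<dots> = (\<Sum>k. integral\<^sup>N lborel (g k))"
    by (rule nn_integral_suminf) (rule g_meas)
  also have "\<dots> = (\<Sum>k. ennreal (4 * V * R * (1/2)^k))"
  proof (rule suminf_cong)
    fix k
    have "integral\<^sup>N lborel (g k) = ennreal (4^(Suc k) / R^2) * emeasure lborel (ball p (R / 2^k))"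
      unfolding g_def by (rule nn_integral_cmult_indicator) simp
    also have "\<dots> = ennreal (4^(Suc k) / R^2) * ennreal (V * (R / 2^k) ^ 3)"
      using R by (simp add: emeasure_ball V_def)
    also have "\<dots> = ennreal (4^(Suc k) / R^2 * (V * (R / 2^k) ^ 3))"
      by (rule ennreal_mult[symmetric]) (use R V in auto)
    moreover have "4^(Suc k) / R^2 * (V * (R / 2^k) ^ 3) = 4 * V * R * (1/2::real)^k"
    proof -
      have e1: "(2::real)^k * 4^k = 8^k" by (simp add: power_mult_distrib[symmetric])
      have e3: "((2::real)^k)^3 = 8^k"
      proof -
        have "((2::real)^k)^3 = 2^(k*3)" by (rule power_mult[symmetric])
        also have "\<dots> = (2^3)^k" by (simp only: mult.commute[of k 3] power_mult)
        finally show ?thesis by simp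
      qed
      have e2: "R^3 = R * R^2" by (simp add: power2_eq_square power3_eq_cube)
      have "4^(Suc k) / R^2 * (V * (R / 2^k) ^ 3) = 4 * 4^k * V * R^3 / (R^2 * 8^k)"
      proof -
        have "(R/2^k)^3 = R^3/8^k" by (simp only: power_divide e3)
        then show ?thesis by (simp only: power_Suc) (simp add: field_simps)
      qed
      also have "\<dots> = 4 * V * R * (4^k / 8^k)" using R by (simp add: e2 field_simps)
      also have "\<dots> = 4 * V * R * (1/2::real)^k"
      proof -
        have "(4::real)^k / 8^k = (1/2::real)^k" by (simp add: e1[symmetric] power_divide)
        then show ?thesis by simp
      qed
      finally show ?thesis .
    qed
    ultimately show "integral\<^sup>N lborel (g k) = ennreal (4 * V * R * (1/2)^k)" by simp
  qed
  also have "\<dots> < \<infinity>"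
  proof -
    have sm: "summable (\<lambda>k. 4 * V * R * (1/2::real)^k)"
      by (intro summable_mult summable_geometric) simp
    have nn: "\<And>k. 0 \<le> 4 * V * R * (1/2::real)^k" using V R by simp
    show ?thesis using ennreal_suminf_neq_top[OF sm nn] by (simp add: less_top)
  qed
  finally have fin: "(\<integral>\<^sup>+q. ennreal (norm (indicator (ball p R) q *\<^sub>R (1 / (norm (p - q))^2))) \<partial>lborel) < \<infinity>" .
  have [measurable]: "ball p R \<in> sets lborel" by simp
  show ?thesis unfolding set_integrable_def
  proof (rule integrableI_bounded)
    show "(\<lambda>x. indicat_real (ball p R) x *\<^sub>R (1 / (norm (p - x))\<^sup>2)) \<in> borel_measurable lborel"
      by measurable
  qed (rule fin)
qed



lemma inv_sq_abs_int:
  fixes p :: "real^3" and L :: real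
  assumes L: "L > 0"
  shows "(\<lambda>q. 1 / (norm (p - q))^2) absolutely_integrable_on ball 0 L"
proof -
  define R where "R = norm p + L"
  have R: "R > 0" using L by (simp add: R_def add_nonneg_pos)
  have [measurable]: "ball p R \<in> sets lborel" by simp
  have "set_integrable lborel (ball p R) (\<lambda>q. 1 / (norm (p - q))^2)"
    by (rule inv_sq_set_integrable[OF R])
  then have si: "set_integrable lebesgue (ball p R) (\<lambda>q. 1 / (norm (p - q))^2)"
    unfolding set_integrable_def
    by (subst integrable_completion) measurable
  have sub: "ball 0 L \<subseteq> ball p R"
  proof
    fix q :: "real^3" assume "q \<in> ball 0 L"
    then have "norm q < L" by simp
    then have "norm (p - q) < R" unfolding R_def using norm_triangle_ineq4[of p q] by linarith
    then show "q \<in> ball p R" by (simp add: dist_norm)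
  qed
  show ?thesis
    by (rule set_integrable_subset[OF si _ sub]) simp
qed

lemma orth_int_vec:
  fixes f :: "real^3 \<Rightarrow> real^'n" and T :: "real^3 \<Rightarrow> real^3"
  assumes T: "orthogonal_transformation T" and f: "f absolutely_integrable_on ball 0 r"
  shows "(f \<circ> T) absolutely_integrable_on ball 0 r" "integral (ball 0 r) (f \<circ> T) = integral (ball 0 r) f"
proof -
  have lin: "linear T" using T by (simp add: orthogonal_transformation_linear)
  have img: "T ` ball 0 r = ball 0 r"
    using image_orthogonal_transformation_ball[OF T, of 0 r] lin by (simp add: linear_0)
  have det: "\<bar>det (matrix T)\<bar> = 1" using T by simp
  have f': "f absolutely_integrable_on T ` ball 0 r" using f img by simp
  show "(f \<circ> T) absolutely_integrable_on ball 0 r"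
    using absolutely_integrable_on_linear_image[OF lin, where f=f and S="ball 0 r"] f' det by auto
  have "integral (T ` ball 0 r) f = \<bar>det (matrix T)\<bar> *\<^sub>R integral (ball 0 r) (f \<circ> T)"
    by (rule integral_change_of_variables_linear[OF lin]) (use f' in blast)
  then show "integral (ball 0 r) (f \<circ> T) = integral (ball 0 r) f" using img det by simp
qed

lemma orth_int_real:
  fixes g :: "real^3 \<Rightarrow> real" and T :: "real^3 \<Rightarrow> real^3"
  assumes T: "orthogonal_transformation T" and g: "g absolutely_integrable_on ball 0 r"
  shows "(g \<circ> T) absolutely_integrable_on ball 0 r" "integral (ball 0 r) (g \<circ> T) = integral (ball 0 r) g"
proof -
  define G where "G = (\<lambda>x. Finite_Cartesian_Product.vec (g x) :: real^1)"
  have blv: "bounded_linear (Finite_Cartesian_Product.vec :: real \<Rightarrow> real^1)"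
    by (rule linear_conv_bounded_linear[THEN iffD1], rule linear_vec)
  have bln: "bounded_linear (\<lambda>v::real^1. v $ 1)" by (rule bounded_linear_vec_nth)
  have G: "G absolutely_integrable_on ball 0 r"
    using absolutely_integrable_linear[OF g blv] by (simp add: G_def o_def)
  have GT: "(G \<circ> T) absolutely_integrable_on ball 0 r" and GTi: "integral (ball 0 r) (G \<circ> T) = integral (ball 0 r) G"
    using orth_int_vec[OF T G] by auto
  have "(g \<circ> T) = (\<lambda>v. v $ 1) \<circ> (G \<circ> T)" by (auto simp: G_def)
  then show "(g \<circ> T) absolutely_integrable_on ball 0 r"
    using absolutely_integrable_linear[OF GT bln] by simp
  have i1: "integral (ball 0 r) (\<lambda>x. (G \<circ> T) x $ 1) = integral (ball 0 r) (G \<circ> T) $ 1"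
    by (rule integral_component_eq_cart) (rule set_lebesgue_integral_eq_integral(1)[OF GT])
  have i2: "integral (ball 0 r) (\<lambda>x. G x $ 1) = integral (ball 0 r) G $ 1"
    by (rule integral_component_eq_cart) (rule set_lebesgue_integral_eq_integral(1)[OF G])
  show "integral (ball 0 r) (g \<circ> T) = integral (ball 0 r) g"
    using i1 i2 GTi by (simp add: G_def o_def)
qed



definition refl :: "real^3 \<Rightarrow> real^3 \<Rightarrow> real^3" where
  "refl u x = x - (2 * (x \<bullet> u)) *\<^sub>R u"

lemma refl_orth: assumes "norm u = 1" shows "orthogonal_transformation (refl u)"
proof -
  have uu: "u \<bullet> u = 1" using assms by (simp add: norm_eq_1)
  have "linear (refl u)"
    by (rule linearI) (simp_all add: refl_def inner_add_left algebra_simps scaleR_add_left)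
  moreover have "refl u v \<bullet> refl u w = v \<bullet> w" for v w
    by (simp add: refl_def inner_diff_left inner_diff_right inner_commute uu algebra_simps)
  ultimately show ?thesis unfolding orthogonal_transformation_def by blast
qed

lemma refl_fix: "x \<bullet> u = 0 \<Longrightarrow> refl u x = x"
  by (simp add: refl_def)

lemma radial_vec:
  fixes V :: "real^3 \<Rightarrow> real^3"
  assumes inv: "\<And>T p. orthogonal_transformation T \<Longrightarrow> V (T p) = T (V p)"
  shows "V p = ((V p \<bullet> p) / (norm p)^2) *\<^sub>R p"
proof -
  define c where "c = (V p \<bullet> p) / (norm p)^2"
  define w where "w = V p - c *\<^sub>R p"
  have wp: "w \<bullet> p = 0"
  proof (cases "p = 0")
    case True then show ?thesis by simp
  next
    case False
    then have "(norm p)^2 \<noteq> 0" by simp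
    then show ?thesis unfolding w_def c_def
      by (simp add: inner_diff_left power2_norm_eq_inner[symmetric])
  qed
  have "w = 0"
  proof (rule ccontr)
    assume w0: "w \<noteq> 0"
    define u where "u = w /\<^sub>R norm w"
    have u1: "norm u = 1" using w0 by (simp add: u_def)
    have pu: "p \<bullet> u = 0" using wp by (simp add: u_def inner_commute)
    have "V p = V (refl u p)" using refl_fix[of p u] pu by simp
    also have "\<dots> = refl u (V p)" by (rule inv[OF refl_orth[OF u1]])
    finally have "(2 * (V p \<bullet> u)) *\<^sub>R u = 0" by (simp add: refl_def)
    then have "V p \<bullet> u = 0" using u1 by auto
    then have "V p \<bullet> w = 0" using w0 by (simp add: u_def)
    then have "w \<bullet> w = 0" using wp by (simp add: w_def inner_diff_left inner_commute)
    then show False using w0 by simp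
  qed
  then show ?thesis by (simp add: w_def c_def)
qed

lemma radial_coef_inv:
  fixes V :: "real^3 \<Rightarrow> real^3"
  assumes inv: "\<And>T p. orthogonal_transformation T \<Longrightarrow> V (T p) = T (V p)"
    and T: "orthogonal_transformation T"
  shows "(V (T p) \<bullet> T p) / (norm (T p))^2 = (V p \<bullet> p) / (norm p)^2"
proof -
  have "V (T p) \<bullet> T p = V p \<bullet> p" using inv[OF T] T by (simp add: orthogonal_transformation_def)
  moreover have "norm (T p) = norm p" using T by (simp add: orthogonal_transformation)
  ultimately show ?thesis by simp
qed

lemma sum4: "(\<Sum>i<4. f i) = f 0 + f 1 + f 2 + f (3::nat)"
  by (simp add: numeral_eq_Suc)

lemma Dx_bounds:
  assumes psd: "psd_mat (Dx a b q - complex_of_real (-1/2) \<cdot>\<^sub>m 1\<^sub>m 4)"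
  shows "-1/2 \<le> b" "\<bar>a * vec_nth q 3\<bar> \<le> 1/2" "\<bar>a * vec_nth q 1\<bar> \<le> 1/2" "\<bar>a * vec_nth q 2\<bar> \<le> 1/2"
proof -
  let ?M = "Dx a b q - complex_of_real (-1/2) \<cdot>\<^sub>m 1\<^sub>m 4"
  have dim: "dim_row ?M = 4" "dim_col ?M = 4" by simp_all
  have P: "Re (qform ?M v) \<ge> 0" if "v \<in> carrier_vec 4" for v
    using psd that dim unfolding psd_mat_def by auto
  define e where "e j z = Matrix.vec 4 (\<lambda>k. if k = 0 then 1 else if k = j then z else (0::complex))" for j z
  have ec: "e j z \<in> carrier_vec 4" for j z by (simp add: e_def)
  have Q: "qform ?M (e j z) = (\<Sum>i<4. \<Sum>k<4. cnj (e j z $ i) * ?M $$ (i,k) * e j z $ k)" for j z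
    by (simp add: qform_def)
  have "Re (qform ?M (e 1 0)) = b + 1/2"
    unfolding Q by (simp add: sum4 e_def Dx_def mat_of_rows_list_def)
  then show "-1/2 \<le> b" using P[OF ec, of 1 0] by simp
  have "Re (qform ?M (e 2 1)) = 1 + 2 * (a * vec_nth q 3)"
    unfolding Q by (simp add: sum4 e_def Dx_def mat_of_rows_list_def)
  moreover have "Re (qform ?M (e 2 (-1))) = 1 - 2 * (a * vec_nth q 3)"
    unfolding Q by (simp add: sum4 e_def Dx_def mat_of_rows_list_def)
  ultimately show "\<bar>a * vec_nth q 3\<bar> \<le> 1/2" using P[OF ec, of 2 1] P[OF ec, of 2 "-1"] by linarith
  have "Re (qform ?M (e 3 1)) = 1 + 2 * (a * vec_nth q 1)"
    unfolding Q by (simp add: sum4 e_def Dx_def mat_of_rows_list_def)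
  moreover have "Re (qform ?M (e 3 (-1))) = 1 - 2 * (a * vec_nth q 1)"
    unfolding Q by (simp add: sum4 e_def Dx_def mat_of_rows_list_def)
  ultimately show "\<bar>a * vec_nth q 1\<bar> \<le> 1/2" using P[OF ec, of 3 1] P[OF ec, of 3 "-1"] by linarith
  have "Re (qform ?M (e 3 \<i>)) = 1 + 2 * (a * vec_nth q 2)"
    unfolding Q by (simp add: sum4 e_def Dx_def mat_of_rows_list_def)
  moreover have "Re (qform ?M (e 3 (-\<i>))) = 1 - 2 * (a * vec_nth q 2)"
    unfolding Q by (simp add: sum4 e_def Dx_def mat_of_rows_list_def)
  ultimately show "\<bar>a * vec_nth q 2\<bar> \<le> 1/2" using P[OF ec, of 3 \<i>] P[OF ec, of 3 "-\<i>"] by linarith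
qed

locale setupG =
  fixes L :: real and f0 f1 :: "real \<Rightarrow> real" and \<gamma> :: "real^3 \<Rightarrow> complex mat"
  assumes L: "L > 0"
    and f0neg: "\<And>r. 0 \<le> r \<Longrightarrow> r < L \<Longrightarrow> f0 r \<le> 0"
    and f1neg: "\<And>r. 0 \<le> r \<Longrightarrow> r < L \<Longrightarrow> f1 r \<le> 0"
    and gform: "\<And>q. q \<in> ball 0 L \<Longrightarrow> \<gamma> q = Dm (f1 (norm q)) (f0 (norm q)) q"
    and gA: "\<gamma> \<in> setA L"
begin

lemma gDx: "q \<in> ball 0 L \<Longrightarrow> \<gamma> q = Dx (f1 (norm q)) (f0 (norm q)) q"
  using gform Dm_explicit by simp

lemma g_entries:
  assumes "q \<in> ball 0 L"
  shows "Re (\<gamma> q $$ (0,0)) = f0 (norm q)" "Re (\<gamma> q $$ (0,2)) = f1 (norm q) * vec_nth q 3"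
        "Re (\<gamma> q $$ (0,3)) = f1 (norm q) * vec_nth q 1" "- Im (\<gamma> q $$ (0,3)) = f1 (norm q) * vec_nth q 2"
  using gDx[OF assms] by (simp_all add: Dx_def mat_of_rows_list_def)

lemma g_meas: "i < 4 \<Longrightarrow> j < 4 \<Longrightarrow> (\<lambda>q. \<gamma> q $$ (i,j)) \<in> borel_measurable (lebesgue_on (ball 0 L))"
  using gA by (simp add: setA_def)

lemma meas_from:
  assumes "(\<lambda>q. h (\<gamma> q $$ (i,j))) \<in> borel_measurable (lebesgue_on (ball 0 L))"
    and "\<And>q. q \<in> ball 0 L \<Longrightarrow> h (\<gamma> q $$ (i,j)) = g q"
  shows "g \<in> borel_measurable (lebesgue_on (ball 0 L))"
  using assms(1) by (subst measurable_cong[where g="\<lambda>q. h (\<gamma> q $$ (i,j))"]) (auto simp: assms(2))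

lemma meas_b: "(\<lambda>q::real^3. f0 (norm q)) \<in> borel_measurable (lebesgue_on (ball 0 L))"
proof -
  have m: "(\<lambda>q. Re (\<gamma> q $$ (0,0))) \<in> borel_measurable (lebesgue_on (ball 0 L))"
    using g_meas[of 0 0] by measurable
  show ?thesis using meas_from[OF m, of "\<lambda>q. f0 (norm q)"] g_entries by auto
qed

lemma meas_a: "(\<lambda>q. f1 (norm q) * vec_nth q (k::3)) \<in> borel_measurable (lebesgue_on (ball 0 L))"
proof -
  have m02: "(\<lambda>q. Re (\<gamma> q $$ (0,2))) \<in> borel_measurable (lebesgue_on (ball 0 L))"
    using g_meas[of 0 2] by measurable
  have m03: "(\<lambda>q. Re (\<gamma> q $$ (0,3))) \<in> borel_measurable (lebesgue_on (ball 0 L))"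
    using g_meas[of 0 3] by measurable
  have m03': "(\<lambda>q. - Im (\<gamma> q $$ (0,3))) \<in> borel_measurable (lebesgue_on (ball 0 L))"
    using g_meas[of 0 3] by measurable
  consider "k = 1" | "k = 2" | "k = 3" using exhaust_3 by blast
  then show ?thesis
  proof cases
    case 1 then show ?thesis using meas_from[OF m03] g_entries by auto
  next
    case 2 then show ?thesis using meas_from[OF m03'] g_entries by auto
  next
    case 3 then show ?thesis using meas_from[OF m02] g_entries by auto
  qed
qed

lemma bnds:
  assumes q: "q \<in> ball 0 L"
  shows "\<bar>f0 (norm q)\<bar> \<le> 1/2" "\<bar>f1 (norm q) * vec_nth q (k::3)\<bar> \<le> 1/2"
proof -
  have "loewner_le (complex_of_real (-1/2) \<cdot>\<^sub>m 1\<^sub>m 4) (\<gamma> q)" using gA q by (simp add: setA_def)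
  then have psd: "psd_mat (Dx (f1 (norm q)) (f0 (norm q)) q - complex_of_real (-1/2) \<cdot>\<^sub>m 1\<^sub>m 4)"
    using gDx[OF q] by (simp add: loewner_le_def)
  note B = Dx_bounds[OF psd]
  have "f0 (norm q) \<le> 0" using f0neg q by simp
  then show "\<bar>f0 (norm q)\<bar> \<le> 1/2" using B(1) by linarith
  consider "k = 1" | "k = 2" | "k = 3" using exhaust_3 by blast
  then show "\<bar>f1 (norm q) * vec_nth q k\<bar> \<le> 1/2" using B by cases auto
qed

definition Sf :: "real^3 \<Rightarrow> real^3 \<Rightarrow> real" where
  "Sf p q = f0 (norm q) * (1 / (norm (p - q))^2)"
definition Wf :: "real^3 \<Rightarrow> real^3 \<Rightarrow> real^3" where
  "Wf p q = (f1 (norm q) * (1 / (norm (p - q))^2)) *\<^sub>R q"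
definition S :: "real^3 \<Rightarrow> real" where "S p = integral (ball 0 L) (Sf p)"
definition V :: "real^3 \<Rightarrow> real^3" where "V p = integral (ball 0 L) (Wf p)"

lemma bprod:
  fixes h :: "real^3 \<Rightarrow> real" and p :: "real^3"
  assumes m: "h \<in> borel_measurable (lebesgue_on (ball 0 L))" and b: "\<And>q. q \<in> ball 0 L \<Longrightarrow> \<bar>h q\<bar> \<le> 1/2"
  shows "(\<lambda>q. h q * (1 / (norm (p - q))^2)) absolutely_integrable_on ball 0 L"
proof (rule absolutely_integrable_bounded_measurable_product[where h="(*)", OF bilinear_times m])
  show "bounded (h ` ball 0 L)" unfolding bounded_real using b by blast
  show "(\<lambda>q. 1 / (norm (p - q))^2) absolutely_integrable_on ball 0 L" by (rule inv_sq_abs_int[OF L])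
qed simp

lemma Sf_int: "Sf p absolutely_integrable_on ball 0 L"
  unfolding Sf_def by (rule bprod[OF meas_b bnds(1)])

lemma Wc_int: "(\<lambda>q. Wf p q $ (k::3)) absolutely_integrable_on ball 0 L"
proof -
  have "(\<lambda>q. (f1 (norm q) * vec_nth q k) * (1 / (norm (p - q))^2)) absolutely_integrable_on ball 0 L"
    by (rule bprod[OF meas_a bnds(2)])
  moreover have "(\<lambda>q. Wf p q $ k) = (\<lambda>q. (f1 (norm q) * vec_nth q k) * (1 / (norm (p - q))^2))"
    by (auto simp: Wf_def)
  ultimately show ?thesis by simp
qed

lemma Wf_int: "Wf p absolutely_integrable_on ball 0 L"
proof (rule absolutely_integrable_componentwise)
  fix b :: "real^3" assume "b \<in> Basis"
  then obtain i where b: "b = axis i 1" unfolding Basis_vec_def by auto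
  have "(\<lambda>x. Wf p x \<bullet> b) = (\<lambda>q. Wf p q $ i)" by (auto simp: b inner_axis)
  then show "(\<lambda>x. Wf p x \<bullet> b) absolutely_integrable_on ball 0 L" using Wc_int by simp
qed

lemma S_inv:
  assumes T: "orthogonal_transformation T"
  shows "S (T p) = S p"
proof -
  have lin: "linear T" using T by (simp add: orthogonal_transformation_linear)
  have "Sf (T p) \<circ> T = Sf p"
  proof
    fix q
    have "norm (T q) = norm q" "norm (T p - T q) = norm (p - q)"
      using T lin by (simp_all add: orthogonal_transformation linear_diff[symmetric])
    then show "(Sf (T p) \<circ> T) q = Sf p q" by (simp add: Sf_def)
  qed
  then show ?thesis using orth_int_real(2)[OF T Sf_int[of "T p"]] by (simp add: S_def)
qed

lemma V_inv:
  assumes T: "orthogonal_transformation T"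
  shows "V (T p) = T (V p)"
proof -
  have lin: "linear T" using T by (simp add: orthogonal_transformation_linear)
  have blin: "bounded_linear T" using lin by (simp add: linear_conv_bounded_linear)
  have "Wf (T p) \<circ> T = T \<circ> Wf p"
  proof
    fix q
    have "norm (T q) = norm q" "norm (T p - T q) = norm (p - q)"
      using T lin by (simp_all add: orthogonal_transformation linear_diff[symmetric])
    then show "(Wf (T p) \<circ> T) q = (T \<circ> Wf p) q"
      using T by (simp add: Wf_def orthogonal_transformation_scaleR)
  qed
  then have "V (T p) = integral (ball 0 L) (T \<circ> Wf p)"
    using orth_int_vec(2)[OF T Wf_int[of "T p"]] by (simp add: V_def)
  also have "\<dots> = T (V p)" unfolding V_def
    by (rule integral_linear[OF set_lebesgue_integral_eq_integral(1)[OF Wf_int] blin])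
  finally show ?thesis .
qed

lemma S_nonpos: "S p \<le> 0"
proof -
  have "integral (ball 0 L) (Sf p) \<le> integral (ball 0 L) (\<lambda>_::real^3. 0::real)"
  proof (rule Henstock_Kurzweil_Integration.integral_le)
    show "Sf p integrable_on ball 0 L" by (rule set_lebesgue_integral_eq_integral(1)[OF Sf_int])
    show "Sf p q \<le> 0" if "q \<in> ball 0 L" for q
      using f0neg[of "norm q"] that by (simp add: Sf_def divide_nonpos_nonneg)
  qed (rule integrable_0)
  then show ?thesis by (simp add: S_def)
qed


lemma key_ineq:
  fixes t A B c :: real
  assumes A: "A > 0" and B: "B = A + 4 * t" "B > 0" and c: "c \<le> 0"
  shows "c * t * (1 / A - 1 / B) \<le> 0"
proof -
  have "t * (1 / A - 1 / B) = 4 * t^2 / (A * B)"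
    using A B by (simp add: field_simps power2_eq_square)
  also have "\<dots> \<ge> 0" using A B by simp
  finally have "t * (1 / A - 1 / B) \<ge> 0" .
  then show ?thesis using c by (simp add: mult.assoc mult_nonpos_nonneg)
qed

lemma V_dot_nonpos: "V p \<bullet> p \<le> 0"
proof (cases "p = 0")
  case True then show ?thesis by simp
next
  case False
  define u where "u = p /\<^sub>R norm p"
  have u1: "norm u = 1" using False by (simp add: u_def)
  define R where "R = refl u"
  have R: "orthogonal_transformation R" unfolding R_def by (rule refl_orth[OF u1])
  have linR: "linear R" using R by (simp add: orthogonal_transformation_linear)
  have pu: "p \<bullet> u = norm p" using False by (simp add: u_def power2_norm_eq_inner[symmetric] power2_eq_square)
  have Rp: "R p = - p"
  proof -
    have e: "(2 * norm p) *\<^sub>R u = 2 *\<^sub>R p" using False by (simp add: u_def)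
    have "R p = p - (2 * norm p) *\<^sub>R u" by (simp add: R_def refl_def pu)
    also have "\<dots> = p - 2 *\<^sub>R p" by (simp only: e)
    also have "\<dots> = - p" by (simp add: scaleR_2)
    finally show ?thesis .
  qed
  define g where "g q = Wf p q \<bullet> p" for q
  have gint: "g absolutely_integrable_on ball 0 L"
    unfolding g_def by (rule absolutely_integrable_component[OF Wf_int])
  have gi: "g integrable_on ball 0 L" by (rule set_lebesgue_integral_eq_integral(1)[OF gint])
  have Vg: "V p \<bullet> p = integral (ball 0 L) g"
    unfolding V_def g_def
    by (rule integral_component_eq[symmetric], rule set_lebesgue_integral_eq_integral(1)[OF Wf_int])
  have gRint: "(g \<circ> R) integrable_on ball 0 L"
    by (rule set_lebesgue_integral_eq_integral(1)[OF orth_int_real(1)[OF R gint]])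
  have gR: "integral (ball 0 L) (g \<circ> R) = integral (ball 0 L) g" by (rule orth_int_real(2)[OF R gint])
  define h where "h q = g q + g (R q)" for q
  have hi: "h integrable_on ball 0 L" unfolding h_def using integrable_add[OF gi gRint] by (simp add: o_def)
  have hI: "integral (ball 0 L) h = 2 * integral (ball 0 L) g"
    unfolding h_def using integral_add[OF gi gRint] gR by (simp add: o_def)
  have hpt: "h q \<le> 0" if q: "q \<in> ball 0 L" "q \<notin> {p, -p}" for q
  proof -
    define t where "t = q \<bullet> p"
    define A where "A = (norm (p - q))^2"
    define B where "B = (norm (p + q))^2"
    have A: "A > 0" using q by (auto simp: A_def)
    have B0: "B > 0" using q by (auto simp: B_def add_eq_0_iff2 minus_equation_iff[of q])
    have AB: "B = A + 4 * t"
      by (simp add: A_def B_def t_def power2_norm_eq_inner inner_add_left inner_add_right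
            inner_diff_left inner_diff_right inner_commute)
    have nRq: "norm (R q) = norm q" using R by (simp add: orthogonal_transformation)
    have Rqp: "R q \<bullet> p = - t"
    proof -
      have "R q \<bullet> p = R q \<bullet> R (- p)" using Rp linR by (simp add: linear_neg)
      also have "\<dots> = - (q \<bullet> p)" using R by (simp add: orthogonal_transformation_def)
      finally show ?thesis by (simp add: t_def)
    qed
    have npRq: "norm (p - R q) = norm (p + q)"
    proof -
      have "p - R q = R (- p - q)" using Rp linR by (simp add: linear_diff linear_neg)
      then have "norm (p - R q) = norm (- p - q)" using R by (simp add: orthogonal_transformation)
      also have "\<dots> = norm (p + q)" by (simp add: norm_minus_commute[of "-p" q] add.commute)
      finally show ?thesis .
    qed
    have "h q = f1 (norm q) * t * (1 / A - 1 / B)"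
      unfolding h_def g_def Wf_def using nRq Rqp npRq
      by (simp add: t_def A_def B_def algebra_simps inner_commute)
    also have "\<dots> \<le> 0"
      by (rule key_ineq[OF A AB B0]) (use f1neg[of "norm q"] q in simp)
    finally show ?thesis .
  qed
  define h' where "h' q = (if q \<in> {p, -p} then 0 else h q)" for q
  have neg: "negligible {p, -p}" by simp
  have h'i: "h' integrable_on ball 0 L"
    by (rule integrable_spike[OF hi neg]) (simp add: h'_def)
  have "integral (ball 0 L) h = integral (ball 0 L) h'"
    by (rule integral_spike[OF neg]) (simp add: h'_def)
  also have "\<dots> \<le> integral (ball 0 L) (\<lambda>_::real^3. 0::real)"
    by (rule Henstock_Kurzweil_Integration.integral_le[OF h'i integrable_0]) (auto simp: h'_def hpt)
  finally have "integral (ball 0 L) h \<le> 0" by simp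
  then show ?thesis using hI Vg by simp
qed

end


lemma dirac_dims[simp]:
  "dim_row dirac_beta = 4" "dim_col dirac_beta = 4"
  "dim_row dirac_alpha1 = 4" "dim_col dirac_alpha1 = 4"
  "dim_row dirac_alpha2 = 4" "dim_col dirac_alpha2 = 4"
  "dim_row dirac_alpha3 = 4" "dim_col dirac_alpha3 = 4"
  by (simp_all add: dirac_beta_def dirac_alpha1_def dirac_alpha2_def dirac_alpha3_def mat_of_rows_list_def numeral_eq_Suc)

lemma alpha_dot_dims[simp]: "dim_row (alpha_dot q) = 4" "dim_col (alpha_dot q) = 4"
  by (simp_all add: alpha_dot_def)

lemma D0_dims[simp]: "dim_row (D0 q) = 4" "dim_col (D0 q) = 4"
  by (simp_all add: D0_def)

lemma alpha_dot_entry: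
  "i < 4 \<Longrightarrow> j < 4 \<Longrightarrow> alpha_dot q $$ (i,j) = complex_of_real (vec_nth q 1) * dirac_alpha1 $$ (i,j)
     + complex_of_real (vec_nth q 2) * dirac_alpha2 $$ (i,j) + complex_of_real (vec_nth q 3) * dirac_alpha3 $$ (i,j)"
  by (simp add: alpha_dot_def)

lemma Dm_entry:
  "i < 4 \<Longrightarrow> j < 4 \<Longrightarrow> Dm a b q $$ (i,j) = complex_of_real (a * vec_nth q 1) * dirac_alpha1 $$ (i,j)
     + complex_of_real (a * vec_nth q 2) * dirac_alpha2 $$ (i,j) + complex_of_real (a * vec_nth q 3) * dirac_alpha3 $$ (i,j)
     + complex_of_real b * dirac_beta $$ (i,j)"
  by (simp add: Dm_def alpha_dot_entry algebra_simps)

lemma D0_Dm: "D0 p = Dm 1 1 p"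
proof (rule mat4_eqI)
  show "D0 p \<in> carrier_mat 4 4" by (simp add: D0_def)
  fix i j :: nat assume "i \<in> {0,1,2,3}" "j \<in> {0,1,2,3}"
  then have ij: "i < 4" "j < 4" by auto
  then show "D0 p $$ (i,j) = Dm 1 1 p $$ (i,j)"
    by (simp add: D0_def Dm_entry alpha_dot_entry)
qed simp

lemma div_combo:
  fixes x1 x2 x3 x0 d :: real and z1 z2 z3 z0 :: complex
  shows "(complex_of_real x1 * z1 + complex_of_real x2 * z2 + complex_of_real x3 * z3 + complex_of_real x0 * z0) / complex_of_real d
    = complex_of_real (x1 * (1/d)) * z1 + complex_of_real (x2 * (1/d)) * z2 + complex_of_real (x3 * (1/d)) * z3 + complex_of_real (x0 * (1/d)) * z0"
  by (cases "d = 0") (simp_all add: field_simps)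

lemma int_combo:
  fixes g1 g2 g3 g0 :: "real^3 \<Rightarrow> real" and z1 z2 z3 z0 :: complex
  assumes "g1 integrable_on S" "g2 integrable_on S" "g3 integrable_on S" "g0 integrable_on S"
  shows "integral S (\<lambda>q. complex_of_real (g1 q) * z1 + complex_of_real (g2 q) * z2 + complex_of_real (g3 q) * z3 + complex_of_real (g0 q) * z0)
    = complex_of_real (integral S g1) * z1 + complex_of_real (integral S g2) * z2 + complex_of_real (integral S g3) * z3 + complex_of_real (integral S g0) * z0"
proof -
  have h: "((\<lambda>q. complex_of_real (g q) * z) has_integral complex_of_real (integral S g) * z) S"
    if "g integrable_on S" for g :: "real^3 \<Rightarrow> real" and z
    by (intro has_integral_mult_left has_integral_of_real integrable_integral that)
  show ?thesis
    by (intro integral_unique has_integral_add h assms)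
qed

lemma combo_alg:
  fixes x1 x2 x3 k c s :: real and z1 z2 z3 z0 :: complex
  shows "complex_of_real (1 * x1) * z1 + complex_of_real (1 * x2) * z2 + complex_of_real (1 * x3) * z3 + complex_of_real 1 * z0
    - complex_of_real k * (complex_of_real (c * x1) * z1 + complex_of_real (c * x2) * z2 + complex_of_real (c * x3) * z3 + complex_of_real s * z0)
    = complex_of_real ((1 - k * c) * x1) * z1 + complex_of_real ((1 - k * c) * x2) * z2 + complex_of_real ((1 - k * c) * x3) * z3 + complex_of_real (1 - k * s) * z0"
  by (simp add: algebra_simps)

context setupG
begin

lemma M_entry:
  assumes ij: "i < 4" "j < 4" and Vc: "V p = c *\<^sub>R p"
  shows "integral (ball 0 L) (\<lambda>q. \<gamma> q $$ (i,j) / complex_of_real ((norm (p - q))^2)) = Dm c (S p) p $$ (i,j)"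
proof -
  have "integral (ball 0 L) (\<lambda>q. \<gamma> q $$ (i,j) / complex_of_real ((norm (p - q))^2)) =
        integral (ball 0 L) (\<lambda>q. complex_of_real (Wf p q $ 1) * dirac_alpha1 $$ (i,j) + complex_of_real (Wf p q $ 2) * dirac_alpha2 $$ (i,j)
           + complex_of_real (Wf p q $ 3) * dirac_alpha3 $$ (i,j) + complex_of_real (Sf p q) * dirac_beta $$ (i,j))"
  proof (rule integral_cong)
    fix q :: "real^3" assume q: "q \<in> ball 0 L"
    show "\<gamma> q $$ (i,j) / complex_of_real ((norm (p - q))^2) = complex_of_real (Wf p q $ 1) * dirac_alpha1 $$ (i,j) + complex_of_real (Wf p q $ 2) * dirac_alpha2 $$ (i,j)
           + complex_of_real (Wf p q $ 3) * dirac_alpha3 $$ (i,j) + complex_of_real (Sf p q) * dirac_beta $$ (i,j)"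
      unfolding gform[OF q] Dm_entry[OF ij] div_combo by (simp add: Wf_def Sf_def mult_ac)
  qed
  also have "\<dots> = complex_of_real (integral (ball 0 L) (\<lambda>q. Wf p q $ 1)) * dirac_alpha1 $$ (i,j)
        + complex_of_real (integral (ball 0 L) (\<lambda>q. Wf p q $ 2)) * dirac_alpha2 $$ (i,j)
        + complex_of_real (integral (ball 0 L) (\<lambda>q. Wf p q $ 3)) * dirac_alpha3 $$ (i,j)
        + complex_of_real (integral (ball 0 L) (Sf p)) * dirac_beta $$ (i,j)"
    by (rule int_combo) (rule set_lebesgue_integral_eq_integral(1), rule Wc_int Sf_int)+
  also have "\<dots> = Dm c (S p) p $$ (i,j)"
  proof -
    have Wi: "Wf p integrable_on ball 0 L" by (rule set_lebesgue_integral_eq_integral(1)[OF Wf_int])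
    have "integral (ball 0 L) (\<lambda>q. Wf p q $ k) = c * vec_nth p k" for k
      using integral_component_eq_cart[OF Wi, of k] Vc by (simp add: V_def)
    then show ?thesis by (simp add: Dm_entry[OF ij] S_def)
  qed
  finally show ?thesis .
qed

lemma Dgamma_eq:
  assumes Vc: "V p = c *\<^sub>R p"
  shows "Dgamma a L \<gamma> p = Dm (1 - a / (2 * pi^2) * c) (1 - a / (2 * pi^2) * S p) p"
proof (rule mat4_eqI)
  show "Dgamma a L \<gamma> p \<in> carrier_mat 4 4" unfolding Dgamma_def by (intro minus_carrier_mat smult_carrier_mat mat_carrier)
  show "Dm (1 - a / (2 * pi^2) * c) (1 - a / (2 * pi^2) * S p) p \<in> carrier_mat 4 4" by simp
  fix i j :: nat assume "i \<in> {0,1,2,3}" "j \<in> {0,1,2,3}"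
  then have ij: "i < 4" "j < 4" by auto
  have "Dgamma a L \<gamma> p $$ (i,j) = D0 p $$ (i,j) - complex_of_real (a / (2 * pi^2)) *
          integral (ball 0 L) (\<lambda>q. \<gamma> q $$ (i,j) / complex_of_real ((norm (p - q))^2))"
    using ij by (simp add: Dgamma_def D0_def)
  also have "\<dots> = Dm 1 1 p $$ (i,j) - complex_of_real (a / (2 * pi^2)) * Dm c (S p) p $$ (i,j)"
    unfolding D0_Dm M_entry[OF ij Vc] ..
  also have "\<dots> = Dm (1 - a / (2 * pi^2) * c) (1 - a / (2 * pi^2) * S p) p $$ (i,j)"
    unfolding Dm_entry[OF ij] by (rule combo_alg)
  finally show "Dgamma a L \<gamma> p $$ (i,j) = Dm (1 - a / (2 * pi^2) * c) (1 - a / (2 * pi^2) * S p) p $$ (i,j)" .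
qed

end

theorem mainTheorem9:
  fixes \<alpha> \<Lambda> :: real and \<gamma> :: "real^3 \<Rightarrow> complex mat"
  assumes "\<Lambda> > 0" and "\<alpha> \<ge> 0" and "\<gamma> \<in> setB \<Lambda>"
  shows "(\<exists>d0 d1 :: real \<Rightarrow> real. (\<forall>r\<in>{0..<\<Lambda>}. d1 r \<ge> 1 \<and> d0 r \<ge> 1) \<and>
           (AE p in lebesgue_on (ball 0 \<Lambda>).
              Dgamma \<alpha> \<Lambda> \<gamma> p = complex_of_real (d1 (norm p)) \<cdot>\<^sub>m alpha_dot p
                               + complex_of_real (d0 (norm p)) \<cdot>\<^sub>m dirac_beta))
       \<and> (AE p in lebesgue_on (ball 0 \<Lambda>).
              loewner_le (mat_abs (D0 p)) (mat_abs (Dgamma \<alpha> \<Lambda> \<gamma> p))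
            \<and> loewner_le (complex_of_real (norm p) \<cdot>\<^sub>m 1\<^sub>m 4) (mat_abs (D0 p)))"
proof -
  obtain f0 f1 :: "real \<Rightarrow> real" where gA: "\<gamma> \<in> setA \<Lambda>"
    and fn: "\<forall>r\<in>{0..<\<Lambda>}. f0 r \<le> 0 \<and> f1 r \<le> 0"
    and gf: "\<forall>p\<in>ball 0 \<Lambda>. \<gamma> p = complex_of_real (f1 (norm p)) \<cdot>\<^sub>m alpha_dot p + complex_of_real (f0 (norm p)) \<cdot>\<^sub>m dirac_beta"
    using assms(3) unfolding setB_def by blast
  interpret G: setupG \<Lambda> f0 f1 \<gamma>
    by unfold_locales (use assms(1) fn gf gA in \<open>auto simp: Dm_def\<close>)
  define c where "c p = (G.V p \<bullet> p) / (norm p)^2" for p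
  have Vr: "G.V p = c p *\<^sub>R p" for p
    unfolding c_def by (rule radial_vec) (rule G.V_inv)
  have cinv: "c (T p) = c p" if "orthogonal_transformation T" for T p
    unfolding c_def by (rule radial_coef_inv[OF G.V_inv that])
  have cneg: "c p \<le> 0" for p
    unfolding c_def using G.V_dot_nonpos[of p] by (simp add: divide_nonpos_nonneg)
  define \<kappa> where "\<kappa> = \<alpha> / (2 * pi^2)"
  have \<kappa>: "\<kappa> \<ge> 0" using assms(2) by (simp add: \<kappa>_def)
  define e :: "real^3" where "e = axis 1 1"
  define d0 where "d0 r = 1 - \<kappa> * G.S (r *\<^sub>R e)" for r
  define d1 where "d1 r = 1 - \<kappa> * c (r *\<^sub>R e)" for r
  have rad: "G.S (norm p *\<^sub>R e) = G.S p \<and> c (norm p *\<^sub>R e) = c p" for p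
  proof -
    have "norm (norm p *\<^sub>R e) = norm p" by (simp add: e_def)
    then obtain T where T: "orthogonal_transformation T" "T (norm p *\<^sub>R e) = p"
      using orthogonal_transformation_exists by metis
    show ?thesis using G.S_inv[OF T(1), of "norm p *\<^sub>R e"] cinv[OF T(1), of "norm p *\<^sub>R e"] T(2) by simp
  qed
  have Deq: "Dgamma \<alpha> \<Lambda> \<gamma> p = Dm (d1 (norm p)) (d0 (norm p)) p" for p
    using G.Dgamma_eq[OF Vr, of \<alpha>] rad[of p] by (simp add: d0_def d1_def \<kappa>_def)
  have dge: "d1 r \<ge> 1 \<and> d0 r \<ge> 1" for r
  proof -
    have "\<kappa> * c (r *\<^sub>R e) \<le> 0" using \<kappa> cneg by (simp add: mult_nonneg_nonpos)
    moreover have "\<kappa> * G.S (r *\<^sub>R e) \<le> 0" using \<kappa> G.S_nonpos by (simp add: mult_nonneg_nonpos)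
    ultimately show ?thesis by (simp add: d0_def d1_def)
  qed
  have part1: "\<exists>d0 d1 :: real \<Rightarrow> real. (\<forall>r\<in>{0..<\<Lambda>}. d1 r \<ge> 1 \<and> d0 r \<ge> 1) \<and>
           (AE p in lebesgue_on (ball 0 \<Lambda>).
              Dgamma \<alpha> \<Lambda> \<gamma> p = complex_of_real (d1 (norm p)) \<cdot>\<^sub>m alpha_dot p
                               + complex_of_real (d0 (norm p)) \<cdot>\<^sub>m dirac_beta)"
    by (rule exI[of _ d0], rule exI[of _ d1]) (auto simp: dge Deq Dm_def intro!: AE_I2)
  have part2: "loewner_le (mat_abs (D0 p)) (mat_abs (Dgamma \<alpha> \<Lambda> \<gamma> p))
            \<and> loewner_le (complex_of_real (norm p) \<cdot>\<^sub>m 1\<^sub>m 4) (mat_abs (D0 p))" for p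
  proof -
    have d: "d1 (norm p) \<ge> 1" "d0 (norm p) \<ge> 1" using dge by auto
    have a1: "mat_abs (D0 p) = complex_of_real (sqrt (1^2 * (norm p)^2 + 1^2)) \<cdot>\<^sub>m 1\<^sub>m 4"
      unfolding D0_Dm by (rule mat_abs_Dm) simp
    have a2: "mat_abs (Dgamma \<alpha> \<Lambda> \<gamma> p) = complex_of_real (sqrt ((d1 (norm p))^2 * (norm p)^2 + (d0 (norm p))^2)) \<cdot>\<^sub>m 1\<^sub>m 4"
      unfolding Deq by (rule mat_abs_Dm) (use d in simp)
    have "1 \<le> (d1 (norm p))^2" "1 \<le> (d0 (norm p))^2" using d by (simp_all add: one_le_power)
    moreover have "1 * (norm p)^2 \<le> (d1 (norm p))^2 * (norm p)^2"
      using \<open>1 \<le> (d1 (norm p))^2\<close> by (intro mult_right_mono) simp_all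
    ultimately have "1^2 * (norm p)^2 + 1^2 \<le> (d1 (norm p))^2 * (norm p)^2 + (d0 (norm p))^2"
      by simp
    then have l1: "loewner_le (mat_abs (D0 p)) (mat_abs (Dgamma \<alpha> \<Lambda> \<gamma> p))"
      unfolding a1 a2 by (intro loewner_scalar real_sqrt_le_mono)
    have "norm p \<le> sqrt (1^2 * (norm p)^2 + 1^2)" by (intro real_le_rsqrt) simp
    then have l2: "loewner_le (complex_of_real (norm p) \<cdot>\<^sub>m 1\<^sub>m 4) (mat_abs (D0 p))"
      unfolding a1 by (rule loewner_scalar)
    show ?thesis using l1 l2 by simp
  qed
  show ?thesis using part1 part2 by (auto intro!: AE_I2)
qed

end
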